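(* Consider the fixed-share algorithm with time-varying parameters, with $\eta_t\le\eta_{t-1}$ for all $t\ge1$. Then for all $t\ge1$, all loss sequences in $[0,1]^d$, and all $q_t\in\Delta_d$, \[ (\hat p_t-q_t)^\top\ell_t\le\sum_{i=1}^dq_{i,t}\Big(\frac1{\eta_{t-1}}\ln\frac1{\hat p_{i,t}}-\frac1{\eta_t}\ln\frac1{v_{i,t+1}}\Big)+\Big(\frac1{\eta_t}-\frac1{\eta_{t-1}}\Big)\ln d+\frac{\eta_{t-1}}8. \]
   Context: Let $d\ge1$ and $\Delta_d=\{q\in[0,1]^d:\sum_{i=1}^d q_i=1\}$. The fixed-share algorithm with time-varying parameters uses sequences $(\eta_t)_{t\ge1}$ of positive numbers and $(\alpha_t)_{t\ge1}$ in $(0,1]$, with the convention $\eta_0=\eta_1$. It sets $\hat p_1=(1/d,\dots,1/d)$; at each round $t\ge1$ it predicts $\hat p_t\in\Delta_d$, observes an arbitrary loss vector $\ell_t=(\ell_{1,t},\dots,\ell_{d,t})\in[0,1]^d$, suffers loss $\hat p_t^\top\ell_t$, and then sets, for $j=1,\dots,d$, $v_{j,t+1}=\hat p_{j,t}^{\,\eta_t/\eta_{t-1}}e^{-\eta_t\ell_{j,t}}\big/\sum_{i=1}^d\hat p_{i,t}^{\,\eta_t/\eta_{t-1}}e^{-\eta_t\ell_{i,t}}$ and $\hat p_{j,t+1}=\alpha_t/d+(1-\alpha_t)v_{j,t+1}$. *)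

theory Defs
  imports Complex_Main
begin

text \<open>Experts are indexed by 0..<d; vectors are functions nat => real.
  Rounds are indexed by t >= 1. The learning-rate sequence eta is used with the
  convention eta_0 = eta_1, implemented by fs_eta.\<close>

definition fs_eta :: "(nat \<Rightarrow> real) \<Rightarrow> nat \<Rightarrow> real" where
  "fs_eta eta t = (if t = 0 then eta 1 else eta t)"

definition fs_update :: "nat \<Rightarrow> real \<Rightarrow> real \<Rightarrow> (nat \<Rightarrow> real) \<Rightarrow> (nat \<Rightarrow> real) \<Rightarrow> nat \<Rightarrow> real" where
  "fs_update d eprev e l p = (\<lambda>j. p j powr (e / eprev) * exp (- e * l j) /
      (\<Sum>i<d. p i powr (e / eprev) * exp (- e * l i)))"

text \<open>fs_phat d eta alpha loss t is the prediction hat p_t (for t >= 1);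
  the value at t = 0 is a dummy.\<close>
primrec fs_phat :: "nat \<Rightarrow> (nat \<Rightarrow> real) \<Rightarrow> (nat \<Rightarrow> real) \<Rightarrow> (nat \<Rightarrow> nat \<Rightarrow> real) \<Rightarrow> nat \<Rightarrow> nat \<Rightarrow> real" where
  "fs_phat d eta alpha loss 0 = (\<lambda>j. 1 / real d)"
| "fs_phat d eta alpha loss (Suc t) =
     (if t = 0 then (\<lambda>j. 1 / real d)
      else (\<lambda>j. alpha t / real d + (1 - alpha t) *
         fs_update d (fs_eta eta (t - 1)) (eta t) (loss t) (fs_phat d eta alpha loss t) j))"

text \<open>fs_v d eta alpha loss (t+1) is v_{t+1} (for t >= 1).\<close>
definition fs_v :: "nat \<Rightarrow> (nat \<Rightarrow> real) \<Rightarrow> (nat \<Rightarrow> real) \<Rightarrow> (nat \<Rightarrow> nat \<Rightarrow> real) \<Rightarrow> nat \<Rightarrow> nat \<Rightarrow> real" where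
  "fs_v d eta alpha loss t =
     fs_update d (fs_eta eta (t - 2)) (eta (t - 1)) (loss (t - 1)) (fs_phat d eta alpha loss (t - 1))"

end

theory Submission
  imports Defs "HOL-Probability.Hoeffding"
begin

lemma hoeff_fin:
  fixes p l :: "nat \<Rightarrow> real" and s :: real
  assumes p0: "\<forall>i<d. 0 \<le> p i" and ps: "(\<Sum>i<d. p i) = 1"
    and lr: "\<forall>i<d. 0 \<le> l i \<and> l i \<le> 1" and s0: "0 \<le> s"
  shows "ln (\<Sum>i<d. p i * exp (- s * l i)) \<le> - s * (\<Sum>i<d. p i * l i) + s^2/8"
proof -
  define m where "m = (\<Sum>i<d. p i * l i)"
  have m0: "0 \<le> m" unfolding m_def using p0 lr by (auto intro!: sum_nonneg)
  have m1: "m \<le> 1" unfolding m_def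
  proof -
    have "(\<Sum>i<d. p i * l i) \<le> (\<Sum>i<d. p i)"
      using p0 lr by (intro sum_mono) (simp add: mult_left_le)
    then show "(\<Sum>i<d. p i * l i) \<le> 1" using ps by simp
  qed
  have cv: "exp (- s * l i) \<le> (1 - l i) + l i * exp (- s)" if "i < d" for i
  proof -
    have "exp ((1 - l i) *\<^sub>R 0 + l i *\<^sub>R (- s)) \<le> (1 - l i) * exp 0 + l i * exp (- s)"
      using lr that by (intro convex_onD[OF exp_convex]) auto
    then show ?thesis by (simp add: mult.commute)
  qed
  have lo: "exp (- s) \<le> (\<Sum>i<d. p i * exp (- s * l i))"
  proof -
    have "exp (- s) = (\<Sum>i<d. p i * exp (- s))" using ps by (simp add: sum_distrib_right[symmetric])
    also have "\<dots> \<le> (\<Sum>i<d. p i * exp (- s * l i))"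
      using p0 lr s0 by (intro sum_mono mult_left_mono) (auto simp: mult_left_le)
    finally show ?thesis .
  qed
  have up: "(\<Sum>i<d. p i * exp (- s * l i)) \<le> (\<Sum>i<d. p i * ((1 - l i) + l i * exp (- s)))"
    using p0 cv by (intro sum_mono mult_left_mono) auto
  also have "\<dots> = 1 - m + m * exp (- s)"
    using ps by (simp add: m_def algebra_simps sum.distrib sum_subtractf sum_distrib_left)
  also have "\<dots> = exp (- s) * (1 + (1 - m) * (exp s - 1))"
    by (simp add: algebra_simps exp_minus field_simps)
  finally have up2: "(\<Sum>i<d. p i * exp (- s * l i)) \<le> exp (- s) * (1 + (1 - m) * (exp s - 1))" .
  have pos: "0 < 1 + (1 - m) * (exp s - 1)"
    using m1 s0 by (intro add_pos_nonneg) auto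
  have "ln (\<Sum>i<d. p i * exp (- s * l i)) \<le> ln (exp (- s) * (1 + (1 - m) * (exp s - 1)))"
    using up2 lo by (intro ln_mono) (auto intro: less_le_trans[OF exp_gt_zero])
  also have "\<dots> = - s + ln (1 + (1 - m) * (exp s - 1))"
    using pos by (simp add: ln_mult)
  also have "\<dots> \<le> - s + (s * (1 - m) + s^2/8)"
    using Hoeffdings_lemma_aux[of s "1 - m"] s0 m1 by simp
  finally show ?thesis by (simp add: m_def algebra_simps)
qed
lemma pmean:
  fixes y :: "nat \<Rightarrow> real" and r :: real
  assumes d1: "d \<ge> 1" and yp: "\<forall>i<d. 0 < y i" and r0: "0 < r" and r1: "r \<le> 1"
  shows "(\<Sum>i<d. y i powr r) \<le> real d powr (1 - r) * (\<Sum>i<d. y i) powr r"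
proof -
  define S where "S = (\<Sum>i<d. y i)"
  have Sp: "0 < S" unfolding S_def using yp d1 by (intro sum_pos) (auto simp: lessThan_empty_iff)
  define a where "a = S / real d"
  have ap: "0 < a" using Sp d1 by (simp add: a_def)
  have Y: "y i powr r * a powr (1 - r) \<le> r * y i + (1 - r) * a" if "i < d" for i
    using Youngs_inequality_0[of r "1 - r" "y i" a] r0 r1 ap yp that by auto
  have "(\<Sum>i<d. y i powr r) * a powr (1 - r) = (\<Sum>i<d. y i powr r * a powr (1 - r))"
    by (simp add: sum_distrib_right)
  also have "\<dots> \<le> (\<Sum>i<d. r * y i + (1 - r) * a)" using Y by (intro sum_mono) auto
  also have "\<dots> = r * S + (1 - r) * a * real d"
    by (simp add: sum.distrib sum_distrib_left S_def)
  also have "\<dots> = S" using d1 by (simp add: a_def field_simps)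
  finally have A: "(\<Sum>i<d. y i powr r) * a powr (1 - r) \<le> S" .
  have apos: "0 < a powr (1 - r)" using ap by simp
  have "(\<Sum>i<d. y i powr r) \<le> S / a powr (1 - r)"
    using A apos by (simp add: pos_le_divide_eq)
  also have "S / a powr (1 - r) = real d powr (1 - r) * S powr r"
  proof -
    have e1: "a powr (1 - r) * real d powr (1 - r) = S powr (1 - r)"
      unfolding a_def using Sp d1 by (simp add: powr_divide)
    have e2: "S = S powr r * S powr (1 - r)"
      using Sp by (simp add: powr_add[symmetric])
    have "S = (real d powr (1 - r) * S powr r) * a powr (1 - r)"
      using e1 e2 by (simp add: ac_simps)
    then show ?thesis using apos by (simp add: divide_eq_eq)
  qed
  finally show ?thesis by (simp add: S_def)
qed

lemma upd_props:
  fixes p l :: "nat \<Rightarrow> real"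
  assumes d1: "d \<ge> 1" and pp: "\<forall>i<d. 0 < p i"
  shows "\<forall>i<d. 0 < fs_update d e' e l p i" and "(\<Sum>i<d. fs_update d e' e l p i) = 1"
proof -
  define W where "W = (\<Sum>i<d. p i powr (e / e') * exp (- e * l i))"
  have Wp: "0 < W" unfolding W_def using pp d1 by (intro sum_pos) (auto simp: lessThan_empty_iff)
  show "\<forall>i<d. 0 < fs_update d e' e l p i"
    using pp Wp unfolding fs_update_def W_def by (auto intro!: divide_pos_pos)
  show "(\<Sum>i<d. fs_update d e' e l p i) = 1"
    using Wp unfolding fs_update_def W_def by (simp add: sum_divide_distrib[symmetric])
qed
lemma key:
  fixes p l q :: "nat \<Rightarrow> real" and e e' :: real
  assumes d1: "d \<ge> 1" and pp: "\<forall>i<d. 0 < p i" and ps: "(\<Sum>i<d. p i) = 1"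
    and lr: "\<forall>i<d. 0 \<le> l i \<and> l i \<le> 1"
    and q0: "\<forall>i<d. 0 \<le> q i" and qs: "(\<Sum>i<d. q i) = 1"
    and e0: "0 < e" and ee: "e \<le> e'"
  shows "(\<Sum>i<d. (p i - q i) * l i)
    \<le> (\<Sum>i<d. q i * (1 / e' * ln (1 / p i) - 1 / e * ln (1 / fs_update d e' e l p i)))
      + (1 / e - 1 / e') * ln (real d) + e' / 8"
proof -
  have e'0: "0 < e'" using e0 ee by simp
  define r where "r = e / e'"
  have r0: "0 < r" and r1: "r \<le> 1" using e0 e'0 ee by (auto simp: r_def)
  have re: "r * e' = e" using e'0 by (simp add: r_def)
  define W where "W = (\<Sum>i<d. p i powr r * exp (- e * l i))"
  have Wp: "0 < W" unfolding W_def using pp d1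
    by (intro sum_pos) (auto simp: lessThan_empty_iff)
  define y where "y i = p i * exp (- e' * l i)" for i
  have yp: "\<forall>i<d. 0 < y i" using pp by (simp add: y_def)
  have yr: "y i powr r = p i powr r * exp (- e * l i)" if "i < d" for i
  proof -
    have "y i powr r = p i powr r * exp (- e' * l i) powr r"
      unfolding y_def using pp that by (simp add: powr_mult)
    also have "exp (- e' * l i) powr r = exp (- e * l i)"
      by (simp add: powr_def flip: re)
    finally show ?thesis .
  qed
  define S where "S = (\<Sum>i<d. y i)"
  have Sp: "0 < S" unfolding S_def using yp d1
    by (intro sum_pos) (auto simp: lessThan_empty_iff)
  have WS: "W \<le> real d powr (1 - r) * S powr r"
    using pmean[OF d1 yp r0 r1] yr unfolding W_def S_def by simp
  have lnW: "ln W \<le> (1 - r) * ln (real d) + r * ln S"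
  proof -
    have "ln W \<le> ln (real d powr (1 - r) * S powr r)"
      using WS Wp by (intro ln_mono) auto
    also have "\<dots> = (1 - r) * ln (real d) + r * ln S"
      using Sp d1 by (simp add: ln_mult ln_powr)
    finally show ?thesis .
  qed
  define m where "m = (\<Sum>i<d. p i * l i)"
  have lnS: "ln S \<le> - e' * m + e'^2/8"
    using hoeff_fin[of d p l e'] pp ps lr e'0 unfolding S_def y_def m_def
    by (simp add: less_imp_le)
  have lnv: "ln (1 / fs_update d e' e l p i) = ln W - r * ln (p i) + e * l i" if "i < d" for i
  proof -
    have "fs_update d e' e l p i = p i powr r * exp (- e * l i) / W"
      unfolding fs_update_def W_def r_def by simp
    moreover have "0 < p i" using pp that by simp
    ultimately show ?thesis using Wp
      by (simp add: ln_div ln_mult ln_powr)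
  qed
  have tm: "q i * (1 / e' * ln (1 / p i) - 1 / e * ln (1 / fs_update d e' e l p i))
      = - q i * ln W / e - q i * l i" if "i < d" for i
  proof -
    have A: "ln (1 / p i) = - ln (p i)" using pp that by (simp add: ln_div)
    show ?thesis unfolding lnv[OF that] A using e0 e'0
      by (simp add: r_def field_simps)
  qed
  have "(\<Sum>i<d. q i * (1 / e' * ln (1 / p i) - 1 / e * ln (1 / fs_update d e' e l p i)))
      = (\<Sum>i<d. - q i * ln W / e - q i * l i)"
    using tm by (intro sum.cong) auto
  also have "\<dots> = - (\<Sum>i<d. q i) * ln W / e - (\<Sum>i<d. q i * l i)"
    by (simp add: sum_subtractf sum_negf sum_divide_distrib sum_distrib_right)
  also have "\<dots> = - ln W / e - (\<Sum>i<d. q i * l i)"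
    using qs by simp
  finally have R: "(\<Sum>i<d. q i * (1 / e' * ln (1 / p i) - 1 / e * ln (1 / fs_update d e' e l p i)))
      = - ln W / e - (\<Sum>i<d. q i * l i)" .
  have main: "ln W / e \<le> - m + (1 / e - 1 / e') * ln (real d) + e' / 8"
  proof -
    have "ln W / e \<le> ((1 - r) * ln (real d) + r * (- e' * m + e'^2/8)) / e"
      using lnW lnS r0 e0 by (intro divide_right_mono) (auto intro: order_trans mult_left_mono)
    also have "\<dots> = - m + (1 / e - 1 / e') * ln (real d) + e' / 8"
      using e0 e'0 by (simp add: r_def field_simps power2_eq_square)
    finally show ?thesis .
  qed
  have L: "(\<Sum>i<d. (p i - q i) * l i) = m - (\<Sum>i<d. q i * l i)"
    by (simp add: m_def left_diff_distrib sum_subtractf)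
  show ?thesis using R L main by linarith
qed
lemma phat_props:
  assumes d1: "d \<ge> 1" and alpha_range: "\<forall>s\<ge>1. 0 < alpha s \<and> alpha s \<le> 1"
  shows "(\<forall>i<d. 0 < fs_phat d eta alpha loss t i) \<and> (\<Sum>i<d. fs_phat d eta alpha loss t i) = 1"
proof (induction t)
  case 0
  then show ?case using d1 by simp
next
  case (Suc t)
  show ?case
  proof (cases "t = 0")
    case True
    then show ?thesis using d1 by simp
  next
    case False
    define u where "u = fs_update d (fs_eta eta (t - 1)) (eta t) (loss t) (fs_phat d eta alpha loss t)"
    have up: "\<forall>i<d. 0 < u i" "(\<Sum>i<d. u i) = 1"
      using upd_props[OF d1, of "fs_phat d eta alpha loss t"] Suc.IH unfolding u_def by auto
    have a: "0 < alpha t" "alpha t \<le> 1" using alpha_range False by auto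
    have eq: "fs_phat d eta alpha loss (Suc t) = (\<lambda>j. alpha t / real d + (1 - alpha t) * u j)"
      using False by (simp add: u_def)
    have pos: "\<forall>i<d. 0 < alpha t / real d + (1 - alpha t) * u i"
      using a up d1 by (auto intro!: add_pos_nonneg)
    have "(\<Sum>i<d. alpha t / real d + (1 - alpha t) * u i) = alpha t + (1 - alpha t) * (\<Sum>i<d. u i)"
      using d1 by (simp add: sum.distrib sum_distrib_left)
    then show ?thesis using eq pos up by simp
  qed
qed

theorem mainTheorem12:
  fixes d :: nat and eta alpha :: "nat \<Rightarrow> real" and loss :: "nat \<Rightarrow> nat \<Rightarrow> real"
    and q :: "nat \<Rightarrow> real" and t :: nat
  assumes d_pos: "d \<ge> 1"
    and eta_pos: "\<forall>s\<ge>1. eta s > 0"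
    and alpha_range: "\<forall>s\<ge>1. 0 < alpha s \<and> alpha s \<le> 1"
    and eta_mono: "\<forall>s\<ge>1. eta s \<le> fs_eta eta (s - 1)"
    and loss_range: "\<forall>s\<ge>1. \<forall>i<d. 0 \<le> loss s i \<and> loss s i \<le> 1"
    and q_nonneg: "\<forall>i<d. 0 \<le> q i"
    and q_sum: "(\<Sum>i<d. q i) = 1"
    and t_pos: "t \<ge> 1"
  shows "(\<Sum>i<d. (fs_phat d eta alpha loss t i - q i) * loss t i)
    \<le> (\<Sum>i<d. q i * (1 / fs_eta eta (t - 1) * ln (1 / fs_phat d eta alpha loss t i)
                    - 1 / eta t * ln (1 / fs_v d eta alpha loss (t + 1) i)))
      + (1 / eta t - 1 / fs_eta eta (t - 1)) * ln (real d)
      + fs_eta eta (t - 1) / 8"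
proof -
  have P: "\<forall>i<d. 0 < fs_phat d eta alpha loss t i" "(\<Sum>i<d. fs_phat d eta alpha loss t i) = 1"
    using phat_props[OF d_pos alpha_range] by auto
  have v: "fs_v d eta alpha loss (t + 1) = fs_update d (fs_eta eta (t - 1)) (eta t) (loss t) (fs_phat d eta alpha loss t)"
    using t_pos by (simp add: fs_v_def)
  show ?thesis unfolding v
    by (rule key[OF d_pos P(1) P(2) _ q_nonneg q_sum])
       (use loss_range eta_pos eta_mono t_pos in auto)
qed
end
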